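(* For every $n\ge1$, every $n$-person weakly totally tight game form $g: X_1\times\cdots\times X_n\to A$ is assignable.
   Context: Let $X_1,\dots,X_n$ and $A$ be finite nonempty sets. An $n$-person game form is a map $g: X_1\times\cdots\times X_n\to A$. $g$ is assignable if there exist functions $g_i: X_i\to A$, $i=1,\dots,n$, such that for every $x=(x_1,\dots,x_n)\in X_1\times\cdots\times X_n$ there is $i$ with $g(x)=g_i(x_i)$. For $i\in[n]$ write $X_{-i}=\prod_{t\neq i}X_t$, and for $s\in X_i$, $y\in X_{-i}$ write $(s,y)$ for the profile with $i$-th coordinate $s$ and other coordinates $y$. $g$ is weakly totally tight (WTT) if for every $i\in[n]$, all $s\neq s'$ in $X_i$ and all $y\neq y'$ in $X_{-i}$, at least one of the equalities $g(s,y)=g(s,y')$, $g(s,y)=g(s',y)$, $g(s',y')=g(s',y)$, $g(s',y')=g(s,y')$ holds. *)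

theory Defs
  imports "HOL-Library.FuncSet"
begin

text \<open>A profile is an element of PiE {..<n} X; a profile of the other players
 (an element of X_{-i}) is an element of PiE ({..<n} - {i}) X, and the
 combined profile (s,y) is y(i := s).\<close>

definition profiles :: "nat \<Rightarrow> (nat \<Rightarrow> 'x set) \<Rightarrow> (nat \<Rightarrow> 'x) set" where
  "profiles n X = PiE {..<n} X"

definition others :: "nat \<Rightarrow> (nat \<Rightarrow> 'x set) \<Rightarrow> nat \<Rightarrow> (nat \<Rightarrow> 'x) set" where
  "others n X i = PiE ({..<n} - {i}) X"

definition game_form :: "nat \<Rightarrow> (nat \<Rightarrow> 'x set) \<Rightarrow> 'a set \<Rightarrow> ((nat \<Rightarrow> 'x) \<Rightarrow> 'a) \<Rightarrow> bool" where
  "game_form n X A g \<longleftrightarrow>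
     (\<forall>i<n. finite (X i) \<and> X i \<noteq> {}) \<and> finite A \<and> A \<noteq> {} \<and>
     (\<forall>x\<in>profiles n X. g x \<in> A)"

definition assignable :: "nat \<Rightarrow> (nat \<Rightarrow> 'x set) \<Rightarrow> 'a set \<Rightarrow> ((nat \<Rightarrow> 'x) \<Rightarrow> 'a) \<Rightarrow> bool" where
  "assignable n X A g \<longleftrightarrow>
     (\<exists>gi :: nat \<Rightarrow> 'x \<Rightarrow> 'a. (\<forall>i<n. \<forall>s\<in>X i. gi i s \<in> A) \<and>
        (\<forall>x\<in>profiles n X. \<exists>i<n. g x = gi i (x i)))"

definition WTT :: "nat \<Rightarrow> (nat \<Rightarrow> 'x set) \<Rightarrow> ((nat \<Rightarrow> 'x) \<Rightarrow> 'a) \<Rightarrow> bool" where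
  "WTT n X g \<longleftrightarrow>
     (\<forall>i<n. \<forall>s\<in>X i. \<forall>s'\<in>X i. \<forall>y\<in>others n X i. \<forall>y'\<in>others n X i.
        s \<noteq> s' \<longrightarrow> y \<noteq> y' \<longrightarrow>
        (g (y(i := s)) = g (y'(i := s)) \<or>
         g (y(i := s)) = g (y(i := s')) \<or>
         g (y'(i := s')) = g (y(i := s')) \<or>
         g (y'(i := s')) = g (y'(i := s))))"

end

theory Submission
  imports Defs
begin


locale twop =
  fixes M :: "'s \<Rightarrow> 'y \<Rightarrow> 'a" and S :: "'s set" and Y :: "'y set"
  assumes wtt: "\<lbrakk>s\<in>S; s'\<in>S; y\<in>Y; y'\<in>Y\<rbrakk> \<Longrightarrow>
     M s y = M s y' \<or> M s y = M s' y \<or> M s' y' = M s' y \<or> M s' y' = M s y'"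
begin

definition D where "D s s' = {y\<in>Y. M s y \<noteq> M s' y}"
definition nc where "nc s' s \<longleftrightarrow> (\<exists>y1\<in>D s s'. \<exists>y2\<in>D s s'. M s' y1 \<noteq> M s' y2)"
definition compat where "compat s v \<longleftrightarrow> (\<forall>s'\<in>S. nc s' s \<longrightarrow> (\<forall>y\<in>D s s'. M s y = v))"

lemma D_sym: "D s s' = D s' s"
  unfolding D_def by auto

lemma K: "\<lbrakk>s\<in>S; s'\<in>S; y\<in>D s s'; y'\<in>D s s'\<rbrakk> \<Longrightarrow> M s y = M s y' \<or> M s' y = M s' y'"
  using wtt[of s s' y y'] by (auto simp: D_def)

lemma L:
  assumes "s\<in>S" "s'\<in>S" "nc s' s" "y\<in>D s s'" "y'\<in>D s s'"
  shows "M s y = M s y'"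
proof (rule ccontr)
  assume ne: "M s y \<noteq> M s y'"
  from assms(3) obtain t t' where t: "t\<in>D s s'" "t'\<in>D s s'" "M s' t \<noteq> M s' t'"
    unfolding nc_def by blast
  have k1: "M s y = M s t \<or> M s' y = M s' t" using K assms t by blast
  have k2: "M s y = M s t' \<or> M s' y = M s' t'" using K assms t by blast
  have k3: "M s y' = M s t \<or> M s' y' = M s' t" using K assms t by blast
  have k4: "M s y' = M s t' \<or> M s' y' = M s' t'" using K assms t by blast
  have k5: "M s t = M s t' \<or> M s' t = M s' t'" using K assms t by blast
  show False using ne k1 k2 k3 k4 k5 t(3) by metis
qed

lemma notnc_const:
  assumes "\<not> nc s' s" "y1\<in>D s s'" "y2\<in>D s s'"
  shows "M s' y1 = M s' y2"
  using assms unfolding nc_def by blast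

lemma AA:
  assumes S: "s0\<in>S" "s1\<in>S" "s2\<in>S" and nc1: "nc s1 s0" and nc2: "nc s2 s0"
    and y1: "y1 \<in> D s0 s1" and y2: "y2 \<in> D s0 s2"
  shows "M s0 y1 = M s0 y2"
proof (rule ccontr)
  assume ne: "M s0 y1 \<noteq> M s0 y2"
  have c1: "\<And>y. y \<in> D s0 s1 \<Longrightarrow> M s0 y = M s0 y1" using L S nc1 y1 by blast
  have c2: "\<And>y. y \<in> D s0 s2 \<Longrightarrow> M s0 y = M s0 y2" using L S nc2 y2 by blast
  from nc1 obtain t t' where t: "t\<in>D s0 s1" "t'\<in>D s0 s1" "M s1 t \<noteq> M s1 t'"
    unfolding nc_def by blast
  from nc2 obtain u u' where u: "u\<in>D s0 s2" "u'\<in>D s0 s2" "M s2 u \<noteq> M s2 u'"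
    unfolding nc_def by blast
  have tY: "t\<in>Y" "t'\<in>Y" "u\<in>Y" "u'\<in>Y" using t u by (auto simp: D_def)
  have m1: "M s0 t = M s0 y1" "M s0 t' = M s0 y1" using c1 t by auto
  have m2: "M s0 u = M s0 y2" "M s0 u' = M s0 y2" using c2 u by auto
  have tn: "t \<notin> D s0 s2" "t' \<notin> D s0 s2" using c2 m1 ne by metis+
  have un: "u \<notin> D s0 s1" "u' \<notin> D s0 s1" using c1 m2 ne by metis+
  have e1: "M s2 t = M s0 y1" "M s2 t' = M s0 y1" using tn tY m1 by (auto simp: D_def)
  have e2: "M s1 u = M s0 y2" "M s1 u' = M s0 y2" using un tY m2 by (auto simp: D_def)
  have d1: "M s1 t \<noteq> M s0 y1" "M s1 t' \<noteq> M s0 y1" using t m1 by (auto simp: D_def)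
  have d2: "M s2 u \<noteq> M s0 y2" "M s2 u' \<noteq> M s0 y2" using u m2 by (auto simp: D_def)
  have w1: "M s1 t = M s0 y2 \<or> M s2 u = M s0 y1" using wtt[of s1 s2 t u] S tY e1 e2 d1 d2 by auto
  have w2: "M s1 t' = M s0 y2 \<or> M s2 u = M s0 y1" using wtt[of s1 s2 t' u] S tY e1 e2 d1 d2 by auto
  have w3: "M s1 t = M s0 y2 \<or> M s2 u' = M s0 y1" using wtt[of s1 s2 t u'] S tY e1 e2 d1 d2 by auto
  have w4: "M s1 t' = M s0 y2 \<or> M s2 u' = M s0 y1" using wtt[of s1 s2 t' u'] S tY e1 e2 d1 d2 by auto
  show False using w1 w2 w3 w4 t(3) u(3) by metis
qed

lemma AB:
  assumes S: "s0\<in>S" "s'\<in>S" "s\<in>S" and nc1: "nc s' s0"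
    and y1: "y1 \<in> D s0 s'" and y2: "y2 \<in> D s0 s" and cs: "compat s w" and nw: "M s y2 \<noteq> w"
  shows "M s0 y1 = M s0 y2"
proof (rule ccontr)
  assume ne: "M s0 y1 \<noteq> M s0 y2"
  have c1: "\<And>y. y \<in> D s0 s' \<Longrightarrow> M s0 y = M s0 y1" using L S nc1 y1 by blast
  have nnc: "\<not> nc s0 s" using cs S y2 nw unfolding compat_def by (metis D_sym)
  have c2: "\<And>y. y \<in> D s0 s \<Longrightarrow> M s0 y = M s0 y2"
    using notnc_const[OF nnc] y2 D_sym by metis
  from nc1 obtain t t' where t: "t\<in>D s0 s'" "t'\<in>D s0 s'" "M s' t \<noteq> M s' t'"
    unfolding nc_def by blast
  have tY: "t\<in>Y" "t'\<in>Y" "y1\<in>Y" "y2\<in>Y" using t y1 y2 by (auto simp: D_def)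
  have m1: "M s0 t = M s0 y1" "M s0 t' = M s0 y1" using c1 t by auto
  have tn: "t \<notin> D s0 s" "t' \<notin> D s0 s" using c2 m1 ne by metis+
  have e1: "M s t = M s0 y1" "M s t' = M s0 y1" using tn tY m1 by (auto simp: D_def)
  have y2n: "y2 \<notin> D s0 s'" using c1 ne by metis
  have e2: "M s' y2 = M s0 y2" using y2n tY by (auto simp: D_def)
  have d1: "M s' t \<noteq> M s0 y1" "M s' t' \<noteq> M s0 y1" using t m1 by (auto simp: D_def)
  have tD: "t \<in> D s s'" "t' \<in> D s s'" using e1 d1 tY by (auto simp: D_def)
  have ncs: "nc s' s" using tD t(3) unfolding nc_def by blast
  have y2D: "y2 \<in> D s s'" using y2 e2 by (auto simp: D_def)
  have "M s y2 = w" using cs S ncs y2D unfolding compat_def by blast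
  with nw show False by simp
qed

lemma BB:
  assumes S: "s0\<in>S" "s1\<in>S" "s2\<in>S"
    and y1: "y1 \<in> D s0 s1" and y2: "y2 \<in> D s0 s2"
    and cs1: "compat s1 w1" and nw1: "M s1 y1 \<noteq> w1"
    and cs2: "compat s2 w2" and nw2: "M s2 y2 \<noteq> w2"
    and pw: "\<And>y. y\<in>Y \<Longrightarrow> M s1 y = M s2 y \<or> M s1 y = w1 \<or> M s2 y = w2"
  shows "M s0 y1 = M s0 y2"
proof (rule ccontr)
  assume ne: "M s0 y1 \<noteq> M s0 y2"
  have nnc1: "\<not> nc s0 s1" using cs1 S y1 nw1 unfolding compat_def by (metis D_sym)
  have c1: "\<And>y. y \<in> D s0 s1 \<Longrightarrow> M s0 y = M s0 y1"
    using notnc_const[OF nnc1] y1 D_sym by metis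
  have nnc2: "\<not> nc s0 s2" using cs2 S y2 nw2 unfolding compat_def by (metis D_sym)
  have c2: "\<And>y. y \<in> D s0 s2 \<Longrightarrow> M s0 y = M s0 y2"
    using notnc_const[OF nnc2] y2 D_sym by metis
  have tY: "y1\<in>Y" "y2\<in>Y" using y1 y2 by (auto simp: D_def)
  have n1: "y1 \<notin> D s0 s2" using c2 ne by metis
  have n2: "y2 \<notin> D s0 s1" using c1 ne by metis
  have e1: "M s2 y1 = M s0 y1" using n1 tY by (auto simp: D_def)
  have e2: "M s1 y2 = M s0 y2" using n2 tY by (auto simp: D_def)
  have q1: "M s1 y1 \<noteq> M s0 y1" using y1 by (auto simp: D_def)
  have q2: "M s2 y2 \<noteq> M s0 y2" using y2 by (auto simp: D_def)
  have p1: "w2 = M s0 y1" using pw[OF tY(1)] e1 q1 nw1 by auto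
  have p2: "w1 = M s0 y2" using pw[OF tY(2)] e2 q2 nw2 by auto
  have "M s1 y1 = M s1 y2 \<or> M s1 y1 = M s2 y1 \<or> M s2 y2 = M s2 y1 \<or> M s2 y2 = M s1 y2"
    using wtt[of s1 s2 y1 y2] S tY by auto
  then show False using e1 e2 q1 q2 p1 p2 nw1 nw2 by auto
qed

lemma forced_eq:
  assumes T: "T \<subseteq> S" and s0: "s0 \<in> S"
    and cT: "\<And>s. s\<in>T \<Longrightarrow> compat s (P s)"
    and pwT: "\<And>s1 s2 y. s1\<in>T \<Longrightarrow> s2\<in>T \<Longrightarrow> y\<in>Y \<Longrightarrow> M s1 y = M s2 y \<or> M s1 y = P s1 \<or> M s2 y = P s2"
    and f1: "(\<exists>s'\<in>S. y1 \<in> D s0 s' \<and> nc s' s0) \<or> (\<exists>s\<in>T. y1 \<in> D s0 s \<and> M s y1 \<noteq> P s)"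
    and f2: "(\<exists>s'\<in>S. y2 \<in> D s0 s' \<and> nc s' s0) \<or> (\<exists>s\<in>T. y2 \<in> D s0 s \<and> M s y2 \<noteq> P s)"
  shows "M s0 y1 = M s0 y2"
proof -
  { assume a1: "\<exists>s'\<in>S. y1 \<in> D s0 s' \<and> nc s' s0" and a2: "\<exists>s'\<in>S. y2 \<in> D s0 s' \<and> nc s' s0"
    then have ?thesis using AA s0 by blast }
  moreover
  { assume a1: "\<exists>s'\<in>S. y1 \<in> D s0 s' \<and> nc s' s0" and a2: "\<exists>s\<in>T. y2 \<in> D s0 s \<and> M s y2 \<noteq> P s"
    then obtain s' s where "s'\<in>S" "y1 \<in> D s0 s'" "nc s' s0" "s\<in>T" "y2 \<in> D s0 s" "M s y2 \<noteq> P s" by blast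
    then have ?thesis using AB[of s0 s' s y1 y2 "P s"] s0 T cT by blast }
  moreover
  { assume a1: "\<exists>s'\<in>S. y2 \<in> D s0 s' \<and> nc s' s0" and a2: "\<exists>s\<in>T. y1 \<in> D s0 s \<and> M s y1 \<noteq> P s"
    then obtain s' s where "s'\<in>S" "y2 \<in> D s0 s'" "nc s' s0" "s\<in>T" "y1 \<in> D s0 s" "M s y1 \<noteq> P s" by blast
    then have "M s0 y2 = M s0 y1" using AB[of s0 s' s y2 y1 "P s"] s0 T cT by blast
    then have ?thesis by simp }
  moreover
  { assume a1: "\<exists>s\<in>T. y1 \<in> D s0 s \<and> M s y1 \<noteq> P s" and a2: "\<exists>s\<in>T. y2 \<in> D s0 s \<and> M s y2 \<noteq> P s"
    then obtain s1 s2 where "s1\<in>T" "y1 \<in> D s0 s1" "M s1 y1 \<noteq> P s1" "s2\<in>T" "y2 \<in> D s0 s2" "M s2 y2 \<noteq> P s2" by blast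
    then have ?thesis using BB[of s0 s1 s2 y1 y2 "P s1" "P s2"] s0 T cT pwT by blast }
  ultimately show ?thesis using f1 f2 by blast
qed

lemma ext_all:
  assumes fin: "finite S" and a0: "a0 \<in> A" and MA: "\<And>s y. s\<in>S \<Longrightarrow> y\<in>Y \<Longrightarrow> M s y \<in> A"
    and TS: "T \<subseteq> S"
  shows "\<exists>P. (\<forall>s\<in>T. P s \<in> A \<and> compat s (P s)) \<and>
    (\<forall>s1\<in>T. \<forall>s2\<in>T. \<forall>y\<in>Y. M s1 y = M s2 y \<or> M s1 y = P s1 \<or> M s2 y = P s2)"
  using finite_subset[OF TS fin] TS
proof (induction T rule: finite_subset_induct')
  case empty
  then show ?case by auto
next
  case (insert s0 T)
  then obtain P where P1: "\<forall>s\<in>T. P s \<in> A \<and> compat s (P s)"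
    and P2: "\<forall>s1\<in>T. \<forall>s2\<in>T. \<forall>y\<in>Y. M s1 y = M s2 y \<or> M s1 y = P s1 \<or> M s2 y = P s2"
    by blast
  define F where "F y \<longleftrightarrow> (\<exists>s'\<in>S. y \<in> D s0 s' \<and> nc s' s0) \<or> (\<exists>s\<in>T. y \<in> D s0 s \<and> M s y \<noteq> P s)" for y
  define v where "v = (if \<exists>y. F y then M s0 (SOME y. F y) else a0)"
  have Fv: "M s0 y = v" if "F y" for y
  proof -
    have ex: "\<exists>y. F y" using that by blast
    have "F (SOME y. F y)" using someI_ex[OF ex] .
    then have "M s0 (SOME y. F y) = M s0 y"
      using forced_eq[of T s0 P "SOME y. F y" y] insert P1 P2 that unfolding F_def by blast
    then show ?thesis unfolding v_def using ex by simp
  qed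
  have vA: "v \<in> A"
  proof (cases "\<exists>y. F y")
    case True
    then have "F (SOME y. F y)" by (rule someI_ex)
    then have "(SOME y. F y) \<in> Y" unfolding F_def D_def by auto
    then show ?thesis unfolding v_def using True MA insert by auto
  next
    case False then show ?thesis unfolding v_def using a0 by auto
  qed
  define P' where "P' = P(s0 := v)"
  have "compat s0 v" unfolding compat_def
  proof (intro ballI impI)
    fix s' y assume "s'\<in>S" "nc s' s0" "y \<in> D s0 s'"
    then have "F y" unfolding F_def by blast
    then show "M s0 y = v" by (rule Fv)
  qed
  then have c1: "\<forall>s\<in>insert s0 T. P' s \<in> A \<and> compat s (P' s)"
    using P1 vA insert unfolding P'_def by auto
  have pwn: "M s0 y = M s y \<or> M s0 y = v \<or> M s y = P s" if "s\<in>T" "y\<in>Y" for s y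
  proof -
    { assume "M s0 y \<noteq> M s y" "M s y \<noteq> P s"
      then have "F y" unfolding F_def D_def using that by blast
      then have "M s0 y = v" by (rule Fv) }
    then show ?thesis by blast
  qed
  have c2: "\<forall>s1\<in>insert s0 T. \<forall>s2\<in>insert s0 T. \<forall>y\<in>Y. M s1 y = M s2 y \<or> M s1 y = P' s1 \<or> M s2 y = P' s2"
    unfolding P'_def using P2 pwn insert(3) by (metis fun_upd_other fun_upd_same insert_iff)
  show ?case using c1 c2 by blast
qed

end



lemma upd_undef_others:
  assumes "x \<in> profiles n X" "j < n"
  shows "x(j := undefined) \<in> others n X j"
  using assms unfolding profiles_def others_def PiE_iff extensional_def by auto

lemma upd_others_prof:
  assumes "y \<in> others n X j" "j < n" "s \<in> X j"
  shows "y(j := s) \<in> profiles n X"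
  using assms unfolding profiles_def others_def PiE_iff extensional_def by auto

lemma upd_prof:
  assumes "x \<in> profiles n X" "j < n" "s \<in> X j"
  shows "x(j := s) \<in> profiles n X"
  using assms unfolding profiles_def PiE_iff extensional_def by auto

lemma WTT_D:
  assumes "WTT n X g" "i < n" "s \<in> X i" "s' \<in> X i" "y \<in> others n X i" "y' \<in> others n X i"
    "s \<noteq> s'" "y \<noteq> y'"
  shows "g (y(i := s)) = g (y'(i := s)) \<or> g (y(i := s)) = g (y(i := s')) \<or>
         g (y'(i := s')) = g (y(i := s')) \<or> g (y'(i := s')) = g (y'(i := s))"
  using assms unfolding WTT_def by simp

lemma player_labels:
  assumes gf: "game_form n X A g" and w: "WTT n X g" and j: "j < n"
  shows "\<exists>P. (\<forall>s\<in>X j. P s \<in> A) \<and>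
    (\<forall>u1\<in>X j. \<forall>u2\<in>X j. \<forall>z\<in>others n X j.
       g (z(j:=u1)) = g (z(j:=u2)) \<or> g (z(j:=u1)) = P u1 \<or> g (z(j:=u2)) = P u2)"
proof -
  interpret twop "\<lambda>s y. g (y(j:=s))" "X j" "others n X j"
  proof
    fix s s' y y' assume a: "s \<in> X j" "s' \<in> X j" "y \<in> others n X j" "y' \<in> others n X j"
    show "g (y(j := s)) = g (y'(j := s)) \<or> g (y(j := s)) = g (y(j := s')) \<or>
          g (y'(j := s')) = g (y(j := s')) \<or> g (y'(j := s')) = g (y'(j := s))"
    proof (cases "s = s' \<or> y = y'")
      case True then show ?thesis by auto
    next
      case False then show ?thesis using WTT_D[OF w j a] by blast
    qed
  qed
  from gf obtain a0 where a0: "a0 \<in> A" unfolding game_form_def by blast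
  have fin: "finite (X j)" using gf j unfolding game_form_def by blast
  have MA: "g (y(j:=s)) \<in> A" if "s \<in> X j" "y \<in> others n X j" for s y
  proof -
    have "y(j:=s) \<in> profiles n X" using upd_others_prof[OF that(2) j that(1)] .
    then show ?thesis using gf unfolding game_form_def by blast
  qed
  show ?thesis using ext_all[OF fin a0 MA subset_refl] by blast
qed

lemma lemmaU:
  assumes w: "WTT n X g"
    and pw: "\<And>j u1 u2 z. j < n \<Longrightarrow> j \<noteq> i \<Longrightarrow> u1 \<in> X j \<Longrightarrow> u2 \<in> X j \<Longrightarrow> z \<in> others n X j \<Longrightarrow>
       g (z(j:=u1)) = g (z(j:=u2)) \<or> g (z(j:=u1)) = P j u1 \<or> g (z(j:=u2)) = P j u2"
  shows "\<forall>x1 x2. x1 \<in> profiles n X \<longrightarrow> x2 \<in> profiles n X \<longrightarrow> card {j. j < n \<and> x1 j \<noteq> x2 j} = d \<longrightarrow>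
     (\<forall>j<n. x1 j \<noteq> x2 j \<longrightarrow> j \<noteq> i \<and> g x1 \<noteq> P j (x1 j) \<and> g x2 \<noteq> P j (x2 j)) \<longrightarrow> g x1 = g x2"
proof (induction d rule: less_induct)
  case (less d)
  show ?case
  proof (intro allI impI)
    fix x1 x2
    assume x1: "x1 \<in> profiles n X" and x2: "x2 \<in> profiles n X"
      and cd: "card {j. j < n \<and> x1 j \<noteq> x2 j} = d"
      and un: "\<forall>j<n. x1 j \<noteq> x2 j \<longrightarrow> j \<noteq> i \<and> g x1 \<noteq> P j (x1 j) \<and> g x2 \<noteq> P j (x2 j)"
    show "g x1 = g x2"
    proof (cases "\<exists>j<n. x1 j \<noteq> x2 j")
      case False
      then have "x1 = x2" using x1 x2 unfolding profiles_def by (intro PiE_ext) (auto simp del: PiE_iff)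
      then show ?thesis by simp
    next
      case True
      then obtain j where j: "j < n" "x1 j \<noteq> x2 j" by blast
      define u1 where "u1 = x1 j"
      define u2 where "u2 = x2 j"
      define z1 where "z1 = x1(j := undefined)"
      define z2 where "z2 = x2(j := undefined)"
      have u1X: "u1 \<in> X j" using x1 j unfolding u1_def profiles_def by auto
      have u2X: "u2 \<in> X j" using x2 j unfolding u2_def profiles_def by auto
      have z1o: "z1 \<in> others n X j" unfolding z1_def using upd_undef_others[OF x1 j(1)] .
      have z2o: "z2 \<in> others n X j" unfolding z2_def using upd_undef_others[OF x2 j(1)] .
      have ji: "j \<noteq> i" and p1: "g x1 \<noteq> P j u1" and q2: "g x2 \<noteq> P j u2"
        using un j unfolding u1_def u2_def by auto
      have ex1: "z1(j:=u1) = x1" unfolding z1_def u1_def by auto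
      have ex2: "z2(j:=u2) = x2" unfolding z2_def u2_def by auto
      define y3 where "y3 = z1(j:=u2)"
      define y4 where "y4 = z2(j:=u1)"
      have y3p: "y3 \<in> profiles n X" unfolding y3_def using upd_others_prof[OF z1o j(1) u2X] .
      have y4p: "y4 \<in> profiles n X" unfolding y4_def using upd_others_prof[OF z2o j(1) u1X] .
      have fin: "finite {k. k < n \<and> x1 k \<noteq> x2 k}" by auto
      have jin: "j \<in> {k. k < n \<and> x1 k \<noteq> x2 k}" using j by auto
      have set3: "{k. k < n \<and> y3 k \<noteq> x2 k} = {k. k < n \<and> x1 k \<noteq> x2 k} - {j}"
        unfolding y3_def z1_def u2_def by (auto split: if_splits)
      have set4: "{k. k < n \<and> x1 k \<noteq> y4 k} = {k. k < n \<and> x1 k \<noteq> x2 k} - {j}"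
        unfolding y4_def z2_def u1_def by (auto split: if_splits)
      have "d > 0" using cd fin jin card_gt_0_iff by blast
      then have lt: "d - 1 < d" by simp
      have c3: "card {k. k < n \<and> y3 k \<noteq> x2 k} = d - 1" using set3 cd fin jin by simp
      have c4: "card {k. k < n \<and> x1 k \<noteq> y4 k} = d - 1" using set4 cd fin jin by simp
      have IH: "\<And>a b. a \<in> profiles n X \<Longrightarrow> b \<in> profiles n X \<Longrightarrow> card {j. j < n \<and> a j \<noteq> b j} = d - 1 \<Longrightarrow>
         (\<forall>j<n. a j \<noteq> b j \<longrightarrow> j \<noteq> i \<and> g a \<noteq> P j (a j) \<and> g b \<noteq> P j (b j)) \<Longrightarrow> g a = g b"
        using less.IH[OF lt] by blast
      have b1: "g x1 = g y3 \<or> g x1 = P j u1 \<or> g y3 = P j u2"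
        using pw[OF j(1) ji u1X u2X z1o] ex1 unfolding y3_def by simp
      have b2: "g y4 = g x2 \<or> g y4 = P j u1 \<or> g x2 = P j u2"
        using pw[OF j(1) ji u1X u2X z2o] ex2 unfolding y4_def by simp
      show ?thesis
      proof (cases "g y3 = g x1")
        case True
        have "g y3 = g x2"
        proof (rule IH[OF y3p x2 c3], intro allI impI)
          fix k assume k: "k < n" "y3 k \<noteq> x2 k"
          then have kk: "k \<noteq> j" "x1 k \<noteq> x2 k" "y3 k = x1 k" unfolding y3_def z1_def u2_def by (auto split: if_splits)
          show "k \<noteq> i \<and> g y3 \<noteq> P k (y3 k) \<and> g x2 \<noteq> P k (x2 k)" using un k kk True by auto
        qed
        then show ?thesis using True by simp
      next
        case F3: False
        then have y3P: "g y3 = P j u2" using b1 p1 by auto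
        show ?thesis
        proof (cases "g y4 = g x2")
          case True
          have "g x1 = g y4"
          proof (rule IH[OF x1 y4p c4], intro allI impI)
            fix k assume k: "k < n" "x1 k \<noteq> y4 k"
            then have kk: "k \<noteq> j" "x1 k \<noteq> x2 k" "y4 k = x2 k" unfolding y4_def z2_def u1_def by (auto split: if_splits)
            show "k \<noteq> i \<and> g x1 \<noteq> P k (x1 k) \<and> g y4 \<noteq> P k (y4 k)" using un k kk True by auto
          qed
          then show ?thesis using True by simp
        next
          case F4: False
          then have y4P: "g y4 = P j u1" using b2 q2 by auto
          have zne: "z1 \<noteq> z2"
          proof
            assume "z1 = z2"
            then have "y3 = x2" unfolding y3_def using ex2 by simp
            then show False using y3P q2 by simp
          qed
          have u12: "u1 \<noteq> u2" using j unfolding u1_def u2_def by simp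
          have "g (z1(j := u1)) = g (z2(j := u1)) \<or> g (z1(j := u1)) = g (z1(j := u2)) \<or>
                g (z2(j := u2)) = g (z1(j := u2)) \<or> g (z2(j := u2)) = g (z2(j := u1))"
            using WTT_D[OF w j(1) u1X u2X z1o z2o u12 zne] .
          then have "g x1 = g y4 \<or> g x1 = g y3 \<or> g x2 = g y3 \<or> g x2 = g y4"
            using ex1 ex2 unfolding y3_def y4_def by simp
          then show ?thesis using y3P y4P p1 q2 F3 F4 by auto
        qed
      qed
    qed
  qed
qed

theorem mainTheorem10:
  fixes n :: nat and X :: "nat \<Rightarrow> 'x set" and A :: "'a set"
    and g :: "(nat \<Rightarrow> 'x) \<Rightarrow> 'a"
  assumes "n \<ge> 1" and "game_form n X A g" and "WTT n X g"
  shows "assignable n X A g"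
proof -
  note gf = assms(2) and w = assms(3)
  from gf obtain a0 where a0: "a0 \<in> A" unfolding game_form_def by blast
  have "\<forall>j. \<exists>P. j < n \<longrightarrow> ((\<forall>s\<in>X j. P s \<in> A) \<and>
    (\<forall>u1\<in>X j. \<forall>u2\<in>X j. \<forall>z\<in>others n X j.
       g (z(j:=u1)) = g (z(j:=u2)) \<or> g (z(j:=u1)) = P u1 \<or> g (z(j:=u2)) = P u2))"
    using player_labels[OF gf w] by blast
  then obtain PP where PP: "\<And>j. j < n \<Longrightarrow> (\<forall>s\<in>X j. PP j s \<in> A) \<and>
    (\<forall>u1\<in>X j. \<forall>u2\<in>X j. \<forall>z\<in>others n X j.
       g (z(j:=u1)) = g (z(j:=u2)) \<or> g (z(j:=u1)) = PP j u1 \<or> g (z(j:=u2)) = PP j u2)"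
    by (metis choice)
  define i where "i = n - 1"
  have i: "i < n" using assms(1) unfolding i_def by simp
  define unc where "unc x \<longleftrightarrow> x \<in> profiles n X \<and> (\<forall>j<n. j \<noteq> i \<longrightarrow> g x \<noteq> PP j (x j))" for x
  define gi where "gi j s = (if j = i then (if \<exists>x. unc x \<and> x i = s then g (SOME x. unc x \<and> x i = s) else a0)
      else PP j s)" for j s
  have U: "\<forall>x1 x2. x1 \<in> profiles n X \<longrightarrow> x2 \<in> profiles n X \<longrightarrow> card {j. j < n \<and> x1 j \<noteq> x2 j} = d \<longrightarrow>
     (\<forall>j<n. x1 j \<noteq> x2 j \<longrightarrow> j \<noteq> i \<and> g x1 \<noteq> PP j (x1 j) \<and> g x2 \<noteq> PP j (x2 j)) \<longrightarrow> g x1 = g x2" for d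
    by (rule lemmaU[OF w]) (use PP in blast)
  have A1: "\<forall>j<n. \<forall>s\<in>X j. gi j s \<in> A"
  proof (intro allI impI ballI)
    fix j s assume j: "j < n" and s: "s \<in> X j"
    show "gi j s \<in> A"
    proof (cases "j = i")
      case True
      show ?thesis
      proof (cases "\<exists>x. unc x \<and> x i = s")
        case ex: True
        have "unc (SOME x. unc x \<and> x i = s)" using someI_ex[OF ex] by blast
        then have "g (SOME x. unc x \<and> x i = s) \<in> A" using gf unfolding unc_def game_form_def by blast
        then show ?thesis unfolding gi_def using True ex by simp
      next
        case False then show ?thesis unfolding gi_def using a0 True by auto
      qed
    next
      case False then show ?thesis unfolding gi_def using PP j s by simp
    qed
  qed
  have A2: "\<forall>x\<in>profiles n X. \<exists>j<n. g x = gi j (x j)"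
  proof
    fix x assume x: "x \<in> profiles n X"
    show "\<exists>j<n. g x = gi j (x j)"
    proof (cases "\<exists>j<n. j \<noteq> i \<and> g x = PP j (x j)")
      case True
      then obtain j where "j < n" "j \<noteq> i" "g x = PP j (x j)" by blast
      then show ?thesis unfolding gi_def by auto
    next
      case False
      then have ux: "unc x" unfolding unc_def using x by blast
      have ex: "\<exists>x'. unc x' \<and> x' i = x i" using ux by blast
      define x' where "x' = (SOME x'. unc x' \<and> x' i = x i)"
      have ux': "unc x' \<and> x' i = x i" unfolding x'_def using someI_ex[OF ex] .
      have "g x' = g x"
        using U[rule_format, of x' x] ux' ux unfolding unc_def by auto
      then have "gi i (x i) = g x" unfolding gi_def x'_def using ex by simp
      then show ?thesis using i by metis
    qed
  qed
  show ?thesis unfolding assignable_def using A1 A2 by blast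
qed


end
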